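(* Let $\Omega A$ and $\Omega B$ be differential graded algebras over $A$ and $B$. Let $E$ be a $(B,A)$-bimodule together with a $k$-linear map $\nabla^0:E\to\Omega^1B\otimes_BE$ satisfying $\nabla^0(be)=db\otimes_Be+b\nabla^0(e)$ for all $b\in B$, $e\in E$, and a $(B,A)$-bimodule map $\sigma:E\otimes_A\Omega^1A\to\Omega^1B\otimes_BE$, such that $\nabla^0(ea)=\nabla^0(e)a+\sigma(e\otimes_A da)$ for all $e\in E$, $a\in A$. For $e\in E$ let $\sigma_e:\Omega^1A\to\Omega^1B\otimes_BE$, $\omega\mapsto\sigma(e\otimes_A\omega)$. Let $M$ be a right $A$-module and $\nabla_0:\mathrm{Hom}_A(\Omega^1A,M)\to M$ a hom-connection. Regard $\mathrm{Hom}_A(E,M)$ as a right $B$-module by $(gb)(e)=g(be)$, and identify $\mathrm{Hom}_B(\Omega^1B,\mathrm{Hom}_A(E,M))\cong\mathrm{Hom}_A(\Omega^1B\otimes_BE,M)$ via $f\mapsto(\omega\otimes_Be\mapsto f(\omega)(e))$. Then the formula $$\nabla_0^E(f)(e):=\nabla_0(f\circ\sigma_e)-f(\nabla^0(e)),\qquad f\in \mathrm{Hom}_A(\Omega^1B\otimes_BE,M),\ e\in E,$$ defines a map $\nabla^E_0:\mathrm{Hom}_B(\Omega^1B,\mathrm{Hom}_A(E,M))\to\mathrm{Hom}_A(E,M)$ (i.e. each $\nabla_0^E(f)$ is right $A$-linear), and $(\mathrm{Hom}_A(E,M),\nabla^E_0)$ is a hom-connection with respect to $\Omega B$.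
   Context: All algebras are associative and unital over a field $k$. A differential graded algebra $\Omega A=\bigoplus_{n\ge0}\Omega^nA$ over $A=\Omega^0A$ has a degree-one differential $d$ with $d^2=0$ satisfying the graded Leibniz rule; similarly for $\Omega B$. For a right $A$-module $M$, $\mathrm{Hom}_A(-,-)$ denotes right $A$-linear maps, and $\mathrm{Hom}_A(\Omega^1A,M)$ is a right $A$-module via $(fa)(\omega)=f(a\omega)$. A (right) hom-connection on $M$ with respect to $\Omega A$ is a $k$-linear map $\nabla_0:\mathrm{Hom}_A(\Omega^1A,M)\to M$ with $\nabla_0(fa)=\nabla_0(f)a+f(da)$ for all $f$ and $a\in A$ (analogously with respect to $\Omega B$ for right $B$-modules). *)

theory Defs
  imports Main "HOL-Library.Function_Algebras"
begin

text \<open>A differential graded algebra over the field k, presented as a unital ring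
  Om (the total algebra) together with a grading G (G n = Omega^n), a differential d
  and the structure map iota : k -> Om (a ring map into the centre of degree 0).
  The base algebra is A = G 0.\<close>

definition dga :: "('k::field \<Rightarrow> 'r::ring_1) \<Rightarrow> (nat \<Rightarrow> 'r set) \<Rightarrow> ('r \<Rightarrow> 'r) \<Rightarrow> bool" where
  "dga \<iota> G d \<longleftrightarrow>
     (\<forall>n. 0 \<in> G n \<and> (\<forall>x\<in>G n. \<forall>y\<in>G n. x + y \<in> G n) \<and> (\<forall>x\<in>G n. - x \<in> G n))
   \<and> (\<forall>m n. \<forall>x\<in>G m. \<forall>y\<in>G n. x * y \<in> G (m + n))
   \<and> 1 \<in> G 0
   \<and> (\<forall>x. \<exists>N c. (\<forall>n. c n \<in> G n) \<and> x = (\<Sum>n<N. c n))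
   \<and> (\<forall>N c. (\<forall>n. c n \<in> G n) \<and> (\<Sum>n<N. c n) = 0 \<longrightarrow> (\<forall>n<N. c n = 0))
   \<and> (\<forall>c c'. \<iota> (c + c') = \<iota> c + \<iota> c' \<and> \<iota> (c * c') = \<iota> c * \<iota> c')
   \<and> \<iota> 1 = 1
   \<and> (\<forall>c. \<iota> c \<in> G 0 \<and> (\<forall>x. \<iota> c * x = x * \<iota> c))
   \<and> (\<forall>n. \<forall>x\<in>G n. d x \<in> G (Suc n))
   \<and> (\<forall>x y. d (x + y) = d x + d y)
   \<and> (\<forall>c x. d (\<iota> c * x) = \<iota> c * d x)
   \<and> (\<forall>x. d (d x) = 0)
   \<and> (\<forall>n. \<forall>x\<in>G n. \<forall>y. d (x * y) = d x * y + (-1) ^ n * x * d y)"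

definition right_module :: "'r::ring_1 set \<Rightarrow> 'x::ab_group_add set \<Rightarrow> ('x \<Rightarrow> 'r \<Rightarrow> 'x) \<Rightarrow> bool" where
  "right_module R0 X act \<longleftrightarrow>
     0 \<in> X \<and> (\<forall>x\<in>X. \<forall>y\<in>X. x + y \<in> X) \<and> (\<forall>x\<in>X. - x \<in> X)
   \<and> (\<forall>x\<in>X. \<forall>r\<in>R0. act x r \<in> X)
   \<and> (\<forall>x\<in>X. \<forall>y\<in>X. \<forall>r\<in>R0. act (x + y) r = act x r + act y r)
   \<and> (\<forall>x\<in>X. \<forall>r\<in>R0. \<forall>s\<in>R0. act x (r + s) = act x r + act x s)
   \<and> (\<forall>x\<in>X. \<forall>r\<in>R0. \<forall>s\<in>R0. act x (r * s) = act (act x r) s)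
   \<and> (\<forall>x\<in>X. act x 1 = x)"

definition left_module :: "'r::ring_1 set \<Rightarrow> 'x::ab_group_add set \<Rightarrow> ('r \<Rightarrow> 'x \<Rightarrow> 'x) \<Rightarrow> bool" where
  "left_module R0 X act \<longleftrightarrow>
     0 \<in> X \<and> (\<forall>x\<in>X. \<forall>y\<in>X. x + y \<in> X) \<and> (\<forall>x\<in>X. - x \<in> X)
   \<and> (\<forall>x\<in>X. \<forall>r\<in>R0. act r x \<in> X)
   \<and> (\<forall>x\<in>X. \<forall>y\<in>X. \<forall>r\<in>R0. act r (x + y) = act r x + act r y)
   \<and> (\<forall>x\<in>X. \<forall>r\<in>R0. \<forall>s\<in>R0. act (r + s) x = act r x + act s x)
   \<and> (\<forall>x\<in>X. \<forall>r\<in>R0. \<forall>s\<in>R0. act (r * s) x = act r (act s x))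
   \<and> (\<forall>x\<in>X. act 1 x = x)"

definition bimodule :: "'b::ring_1 set \<Rightarrow> 'a::ring_1 set \<Rightarrow> ('k \<Rightarrow> 'b) \<Rightarrow> ('k \<Rightarrow> 'a)
    \<Rightarrow> 'x::ab_group_add set \<Rightarrow> ('b \<Rightarrow> 'x \<Rightarrow> 'x) \<Rightarrow> ('x \<Rightarrow> 'a \<Rightarrow> 'x) \<Rightarrow> bool" where
  "bimodule B0 A0 \<iota>B \<iota>A X l r \<longleftrightarrow>
     left_module B0 X l \<and> right_module A0 X r
   \<and> (\<forall>b\<in>B0. \<forall>a\<in>A0. \<forall>x\<in>X. r (l b x) a = l b (r x a))
   \<and> (\<forall>c. \<forall>x\<in>X. l (\<iota>B c) x = r x (\<iota>A c))"

text \<open>T together with tens : X \<times> Y \<rightarrow> T is a tensor product X \<otimes>_R Y of the right R-module X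
  and the left R-module Y: tens is biadditive and R-balanced, its image generates T, and
  every biadditive balanced map into the abelian group 'z factors through an additive map
  on T (universal property, tested against target type 'z).\<close>

definition is_tensor :: "'r::ring_1 set \<Rightarrow> ('x::ab_group_add \<Rightarrow> 'r \<Rightarrow> 'x) \<Rightarrow> 'x set
    \<Rightarrow> ('r \<Rightarrow> 'y::ab_group_add \<Rightarrow> 'y) \<Rightarrow> 'y set \<Rightarrow> ('x \<Rightarrow> 'y \<Rightarrow> 't::ab_group_add)
    \<Rightarrow> 'z::ab_group_add itself \<Rightarrow> bool" where
  "is_tensor R0 mX X mY Y tens (z::'z itself) \<longleftrightarrow>
     (\<forall>x\<in>X. \<forall>x'\<in>X. \<forall>y\<in>Y. tens (x + x') y = tens x y + tens x' y)
   \<and> (\<forall>x\<in>X. \<forall>y\<in>Y. \<forall>y'\<in>Y. tens x (y + y') = tens x y + tens x y')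
   \<and> (\<forall>x\<in>X. \<forall>r\<in>R0. \<forall>y\<in>Y. tens (mX x r) y = tens x (mY r y))
   \<and> (\<forall>t. \<exists>(n::nat) xs ys. (\<forall>i<n. xs i \<in> X \<and> ys i \<in> Y) \<and> t = (\<Sum>i<n. tens (xs i) (ys i)))
   \<and> (\<forall>\<phi> :: 'x \<Rightarrow> 'y \<Rightarrow> 'z.
        (\<forall>x\<in>X. \<forall>x'\<in>X. \<forall>y\<in>Y. \<phi> (x + x') y = \<phi> x y + \<phi> x' y)
      \<and> (\<forall>x\<in>X. \<forall>y\<in>Y. \<forall>y'\<in>Y. \<phi> x (y + y') = \<phi> x y + \<phi> x y')
      \<and> (\<forall>x\<in>X. \<forall>r\<in>R0. \<forall>y\<in>Y. \<phi> (mX x r) y = \<phi> x (mY r y))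
      \<longrightarrow> (\<exists>\<psi> :: 't \<Rightarrow> 'z. (\<forall>s t. \<psi> (s + t) = \<psi> s + \<psi> t)
                           \<and> (\<forall>x\<in>X. \<forall>y\<in>Y. \<psi> (tens x y) = \<phi> x y)))"

text \<open>Hom_A(Omega^1, X): right A-linear maps from Omega^1 (carrier Om1 inside the total
  algebra, A with carrier A0) to the right A-module X; maps are normalised to 0 outside Om1.\<close>

definition homOm :: "'r::ring_1 set \<Rightarrow> 'r set \<Rightarrow> 'x::ab_group_add set \<Rightarrow> ('x \<Rightarrow> 'r \<Rightarrow> 'x)
    \<Rightarrow> ('r \<Rightarrow> 'x) set" where
  "homOm A0 Om1 X act =
     {f. (\<forall>\<omega>\<in>Om1. f \<omega> \<in> X)
       \<and> (\<forall>\<omega>\<in>Om1. \<forall>\<omega>'\<in>Om1. f (\<omega> + \<omega>') = f \<omega> + f \<omega>')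
       \<and> (\<forall>\<omega>\<in>Om1. \<forall>a\<in>A0. f (\<omega> * a) = act (f \<omega>) a)
       \<and> (\<forall>\<omega>. \<omega> \<notin> Om1 \<longrightarrow> f \<omega> = 0)}"

definition hom_ract :: "'r::ring_1 set \<Rightarrow> ('r \<Rightarrow> 'x::ab_group_add) \<Rightarrow> 'r \<Rightarrow> ('r \<Rightarrow> 'x)" where
  "hom_ract Om1 f a = (\<lambda>\<omega>. if \<omega> \<in> Om1 then f (a * \<omega>) else 0)"

definition hom_connection :: "('k::field \<Rightarrow> 'r::ring_1) \<Rightarrow> (nat \<Rightarrow> 'r set) \<Rightarrow> ('r \<Rightarrow> 'r)
    \<Rightarrow> 'x::ab_group_add set \<Rightarrow> ('x \<Rightarrow> 'r \<Rightarrow> 'x) \<Rightarrow> (('r \<Rightarrow> 'x) \<Rightarrow> 'x) \<Rightarrow> bool" where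
  "hom_connection \<iota> G d X act nab \<longleftrightarrow>
     (\<forall>f\<in>homOm (G 0) (G 1) X act. nab f \<in> X)
   \<and> (\<forall>f\<in>homOm (G 0) (G 1) X act. \<forall>g\<in>homOm (G 0) (G 1) X act.
        nab (\<lambda>\<omega>. f \<omega> + g \<omega>) = nab f + nab g)
   \<and> (\<forall>f\<in>homOm (G 0) (G 1) X act. \<forall>c.
        nab (hom_ract (G 1) f (\<iota> c)) = act (nab f) (\<iota> c))
   \<and> (\<forall>f\<in>homOm (G 0) (G 1) X act. \<forall>a\<in>G 0.
        nab (hom_ract (G 1) f a) = act (nab f) a + f (d a))"

definition homAEM :: "'a::ring_1 set \<Rightarrow> ('e::ab_group_add \<Rightarrow> 'a \<Rightarrow> 'e) \<Rightarrow> ('m::ab_group_add \<Rightarrow> 'a \<Rightarrow> 'm)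
    \<Rightarrow> ('e \<Rightarrow> 'm) set" where
  "homAEM A0 rE actM =
     {g. (\<forall>e e'. g (e + e') = g e + g e') \<and> (\<forall>e. \<forall>a\<in>A0. g (rE e a) = actM (g e) a)}"

definition homEM_ract :: "('b \<Rightarrow> 'e \<Rightarrow> 'e) \<Rightarrow> ('e \<Rightarrow> 'm) \<Rightarrow> 'b \<Rightarrow> ('e \<Rightarrow> 'm)" where
  "homEM_ract lE g b = (\<lambda>e. g (lE b e))"

text \<open>The identification Hom_B(Omega^1 B, Hom_A(E,M)) \<cong> Hom_A(Omega^1 B \<otimes>_B E, M):
  F corresponds to the additive map f with f(\<omega> \<otimes> e) = F \<omega> e.\<close>

definition induced_map :: "'b set \<Rightarrow> ('b \<Rightarrow> 'e \<Rightarrow> 't::ab_group_add) \<Rightarrow> ('b \<Rightarrow> 'e \<Rightarrow> 'm::ab_group_add)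
    \<Rightarrow> ('t \<Rightarrow> 'm)" where
  "induced_map Om1 tens F =
     (THE f. (\<forall>s t. f (s + t) = f s + f t) \<and> (\<forall>\<omega>\<in>Om1. \<forall>e. f (tens \<omega> e) = F \<omega> e))"

definition hom_conn_E :: "'oa set \<Rightarrow> 'ob set \<Rightarrow> ('ob \<Rightarrow> 'e \<Rightarrow> 't::ab_group_add)
    \<Rightarrow> ('e \<Rightarrow> 'oa \<Rightarrow> 'u) \<Rightarrow> ('u \<Rightarrow> 't) \<Rightarrow> ('e \<Rightarrow> 't) \<Rightarrow> (('oa \<Rightarrow> 'm::ab_group_add) \<Rightarrow> 'm)
    \<Rightarrow> ('ob \<Rightarrow> 'e \<Rightarrow> 'm) \<Rightarrow> ('e \<Rightarrow> 'm)" where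
  "hom_conn_E OmA1 OmB1 tB tA \<sigma> conn0 nab F =
     (\<lambda>e. nab (\<lambda>\<omega>. if \<omega> \<in> OmA1 then induced_map OmB1 tB F (\<sigma> (tA e \<omega>)) else 0)
          - induced_map OmB1 tB F (conn0 e))"

end

theory Submission
  imports Defs
begin


lemma addh_0:
  fixes f :: "'a::ab_group_add \<Rightarrow> 'b::ab_group_add"
  assumes "\<forall>s t. f (s + t) = f s + f t" shows "f 0 = 0"
  using assms by (metis add_cancel_right_right add_0)

lemma addh_neg:
  fixes f :: "'a::ab_group_add \<Rightarrow> 'b::ab_group_add"
  assumes "\<forall>s t. f (s + t) = f s + f t" shows "f (- x) = - f x"
proof -
  have "f (- x) + f x = 0" using assms addh_0[OF assms] by (metis add.left_inverse)
  thus ?thesis by (simp add: eq_neg_iff_add_eq_0)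
qed

lemma addh_diff:
  fixes f :: "'a::ab_group_add \<Rightarrow> 'b::ab_group_add"
  assumes "\<forall>s t. f (s + t) = f s + f t" shows "f (x - y) = f x - f y"
  using assms addh_neg[OF assms] by (metis diff_conv_add_uminus)

lemma addh_sum:
  fixes f :: "'a::ab_group_add \<Rightarrow> 'b::ab_group_add"
  fixes n :: nat and g :: "nat \<Rightarrow> 'a"
  assumes "\<forall>s t. f (s + t) = f s + f t" shows "f (\<Sum>i<n. g i) = (\<Sum>i<n. f (g i))"
  by (induction n) (simp_all add: assms addh_0[OF assms])

lemma tensor_ext:
  fixes f1 f2 :: "'t::ab_group_add \<Rightarrow> 'z::ab_group_add"
  assumes T: "is_tensor R0 mX X mY Y tens TYPE('z)"
    and a1: "\<forall>s t. f1 (s + t) = f1 s + f1 t"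
    and a2: "\<forall>s t. f2 (s + t) = f2 s + f2 t"
    and ag: "\<forall>x\<in>X. \<forall>y\<in>Y. f1 (tens x y) = f2 (tens x y)"
  shows "f1 = f2"
proof
  fix t
  have "\<exists>(n::nat) xs ys. (\<forall>i<n. xs i \<in> X \<and> ys i \<in> Y) \<and> t = (\<Sum>i<n. tens (xs i) (ys i))"
    using T unfolding is_tensor_def by (elim conjE) (rule spec)
  then obtain n :: nat and xs ys where g: "\<forall>i<n. xs i \<in> X \<and> ys i \<in> Y"
     and t: "t = (\<Sum>i<n. tens (xs i) (ys i))" by blast
  have "f1 t = (\<Sum>i<n. f1 (tens (xs i) (ys i)))" using t addh_sum[OF a1] by simp
  also have "\<dots> = (\<Sum>i<n. f2 (tens (xs i) (ys i)))" using g ag by (intro sum.cong) auto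
  also have "\<dots> = f2 t" using t addh_sum[OF a2] by simp
  finally show "f1 t = f2 t" .
qed

lemma induced_eq:
  fixes f :: "'t::ab_group_add \<Rightarrow> 'z::ab_group_add"
  assumes T: "is_tensor R0 mX X mY UNIV tens TYPE('z)"
    and a: "\<forall>s t. f (s + t) = f s + f t"
    and g: "\<forall>x\<in>X. \<forall>y. f (tens x y) = \<phi> x y"
  shows "induced_map X tens \<phi> = f"
  unfolding induced_map_def
proof (rule the_equality)
  show "(\<forall>s t. f (s + t) = f s + f t) \<and> (\<forall>\<omega>\<in>X. \<forall>e. f (tens \<omega> e) = \<phi> \<omega> e)"
    using a g by blast
next
  fix f' :: "'t \<Rightarrow> 'z"
  assume "(\<forall>s t. f' (s + t) = f' s + f' t) \<and> (\<forall>\<omega>\<in>X. \<forall>e. f' (tens \<omega> e) = \<phi> \<omega> e)"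
  thus "f' = f" using tensor_ext[OF T] a g by (metis (no_types, lifting) UNIV_I)
qed

lemma induced_char:
  fixes \<phi> :: "'x::ab_group_add \<Rightarrow> 'y::ab_group_add \<Rightarrow> 'z::ab_group_add"
    and tens :: "'x \<Rightarrow> 'y \<Rightarrow> 't::ab_group_add"
  assumes T: "is_tensor R0 mX X mY UNIV tens TYPE('z)"
    and p1: "\<forall>x\<in>X. \<forall>x'\<in>X. \<forall>y. \<phi> (x + x') y = \<phi> x y + \<phi> x' y"
    and p2: "\<forall>x\<in>X. \<forall>y y'. \<phi> x (y + y') = \<phi> x y + \<phi> x y'"
    and p3: "\<forall>x\<in>X. \<forall>r\<in>R0. \<forall>y. \<phi> (mX x r) y = \<phi> x (mY r y)"
  shows "(\<forall>s t. induced_map X tens \<phi> (s + t) = induced_map X tens \<phi> s + induced_map X tens \<phi> t)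
       \<and> (\<forall>x\<in>X. \<forall>y. induced_map X tens \<phi> (tens x y) = \<phi> x y)"
proof -
  have "\<exists>\<psi> :: 't \<Rightarrow> 'z. (\<forall>s t. \<psi> (s + t) = \<psi> s + \<psi> t) \<and> (\<forall>x\<in>X. \<forall>y\<in>UNIV. \<psi> (tens x y) = \<phi> x y)"
  proof -
    have U: "\<forall>\<phi> :: 'x \<Rightarrow> 'y \<Rightarrow> 'z.
        (\<forall>x\<in>X. \<forall>x'\<in>X. \<forall>y\<in>UNIV. \<phi> (x + x') y = \<phi> x y + \<phi> x' y)
      \<and> (\<forall>x\<in>X. \<forall>y\<in>UNIV. \<forall>y'\<in>UNIV. \<phi> x (y + y') = \<phi> x y + \<phi> x y')
      \<and> (\<forall>x\<in>X. \<forall>r\<in>R0. \<forall>y\<in>UNIV. \<phi> (mX x r) y = \<phi> x (mY r y))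
      \<longrightarrow> (\<exists>\<psi> :: 't \<Rightarrow> 'z. (\<forall>s t. \<psi> (s + t) = \<psi> s + \<psi> t)
                           \<and> (\<forall>x\<in>X. \<forall>y\<in>UNIV. \<psi> (tens x y) = \<phi> x y))"
      using T unfolding is_tensor_def by (elim conjE)
    show ?thesis using U[rule_format, of \<phi>] p1 p2 p3 by blast
  qed
  then obtain \<psi> :: "'t \<Rightarrow> 'z" where a: "\<forall>s t. \<psi> (s + t) = \<psi> s + \<psi> t"
    and g: "\<forall>x\<in>X. \<forall>y. \<psi> (tens x y) = \<phi> x y" by blast
  have "induced_map X tens \<phi> = \<psi>" by (rule induced_eq[OF T a g])
  thus ?thesis using a g by simp
qed

theorem mainTheorem2:
  fixes \<iota>A :: "'k::field \<Rightarrow> 'oa::ring_1" and GA :: "nat \<Rightarrow> 'oa set" and dA :: "'oa \<Rightarrow> 'oa"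
    and \<iota>B :: "'k \<Rightarrow> 'ob::ring_1" and GB :: "nat \<Rightarrow> 'ob set" and dB :: "'ob \<Rightarrow> 'ob"
    and lE :: "'ob \<Rightarrow> 'e::ab_group_add \<Rightarrow> 'e" and rE :: "'e \<Rightarrow> 'oa \<Rightarrow> 'e"
    and tB :: "'ob \<Rightarrow> 'e \<Rightarrow> 't::ab_group_add" and lT :: "'ob \<Rightarrow> 't \<Rightarrow> 't" and rT :: "'t \<Rightarrow> 'oa \<Rightarrow> 't"
    and tA :: "'e \<Rightarrow> 'oa \<Rightarrow> 'u::ab_group_add" and lU :: "'ob \<Rightarrow> 'u \<Rightarrow> 'u" and rU :: "'u \<Rightarrow> 'oa \<Rightarrow> 'u"
    and conn0 :: "'e \<Rightarrow> 't" and \<sigma> :: "'u \<Rightarrow> 't"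
    and actM :: "'m::ab_group_add \<Rightarrow> 'oa \<Rightarrow> 'm" and nab :: "('oa \<Rightarrow> 'm) \<Rightarrow> 'm"
  assumes dgaA: "dga \<iota>A GA dA"
    and dgaB: "dga \<iota>B GB dB"
    \<comment> \<open>E is a (B,A)-bimodule\<close>
    and E_bimod: "bimodule (GB 0) (GA 0) \<iota>B \<iota>A UNIV lE rE"
    \<comment> \<open>T = Omega^1 B \<otimes>_B E, a (B,A)-bimodule via b(\<omega>\<otimes>e) = (b\<omega>)\<otimes>e, (\<omega>\<otimes>e)a = \<omega>\<otimes>(ea)\<close>
    and T_tensor: "is_tensor (GB 0) (\<lambda>\<omega> b. \<omega> * b) (GB 1) lE UNIV tB TYPE('m)"
    and T_bimod: "bimodule (GB 0) (GA 0) \<iota>B \<iota>A UNIV lT rT"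
    and T_left: "\<forall>b\<in>GB 0. \<forall>\<omega>\<in>GB 1. \<forall>e. tB (b * \<omega>) e = lT b (tB \<omega> e)"
    and T_right: "\<forall>a\<in>GA 0. \<forall>\<omega>\<in>GB 1. \<forall>e. tB \<omega> (rE e a) = rT (tB \<omega> e) a"
    \<comment> \<open>U = E \<otimes>_A Omega^1 A, a (B,A)-bimodule\<close>
    and U_tensor: "is_tensor (GA 0) rE UNIV (\<lambda>a \<omega>. a * \<omega>) (GA 1) tA TYPE('t)"
    and U_bimod: "bimodule (GB 0) (GA 0) \<iota>B \<iota>A UNIV lU rU"
    and U_left: "\<forall>b\<in>GB 0. \<forall>e. \<forall>\<omega>\<in>GA 1. tA (lE b e) \<omega> = lU b (tA e \<omega>)"
    and U_right: "\<forall>a\<in>GA 0. \<forall>e. \<forall>\<omega>\<in>GA 1. tA e (\<omega> * a) = rU (tA e \<omega>) a"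
    \<comment> \<open>nabla^0 : E \<rightarrow> Omega^1 B \<otimes>_B E is k-linear with the left Leibniz rule\<close>
    and conn0_add: "\<forall>e e'. conn0 (e + e') = conn0 e + conn0 e'"
    and conn0_k: "\<forall>c e. conn0 (lE (\<iota>B c) e) = lT (\<iota>B c) (conn0 e)"
    and conn0_left: "\<forall>b\<in>GB 0. \<forall>e. conn0 (lE b e) = tB (dB b) e + lT b (conn0 e)"
    \<comment> \<open>\<sigma> : E \<otimes>_A Omega^1 A \<rightarrow> Omega^1 B \<otimes>_B E is a (B,A)-bimodule map\<close>
    and \<sigma>_add: "\<forall>u v. \<sigma> (u + v) = \<sigma> u + \<sigma> v"
    and \<sigma>_left: "\<forall>b\<in>GB 0. \<forall>u. \<sigma> (lU b u) = lT b (\<sigma> u)"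
    and \<sigma>_right: "\<forall>a\<in>GA 0. \<forall>u. \<sigma> (rU u a) = rT (\<sigma> u) a"
    \<comment> \<open>right twisted Leibniz rule\<close>
    and conn0_right: "\<forall>e. \<forall>a\<in>GA 0. conn0 (rE e a) = rT (conn0 e) a + \<sigma> (tA e (dA a))"
    \<comment> \<open>M is a right A-module with a hom-connection nab\<close>
    and M_mod: "right_module (GA 0) UNIV actM"
    and M_hc: "hom_connection \<iota>A GA dA UNIV actM nab"
  shows "(\<forall>F\<in>homOm (GB 0) (GB 1) (homAEM (GA 0) rE actM) (homEM_ract lE).
            hom_conn_E (GA 1) (GB 1) tB tA \<sigma> conn0 nab F \<in> homAEM (GA 0) rE actM)
       \<and> right_module (GB 0) (homAEM (GA 0) rE actM) (homEM_ract lE)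
       \<and> hom_connection \<iota>B GB dB (homAEM (GA 0) rE actM) (homEM_ract lE)
            (hom_conn_E (GA 1) (GB 1) tB tA \<sigma> conn0 nab)"
  proof -
  have A_la: "\<And>a \<omega>. a \<in> GA 0 \<Longrightarrow> \<omega> \<in> GA 1 \<Longrightarrow> a * \<omega> \<in> GA 1"
    using dgaA unfolding dga_def by (metis add_0)
  have A_ra: "\<And>a \<omega>. a \<in> GA 0 \<Longrightarrow> \<omega> \<in> GA 1 \<Longrightarrow> \<omega> * a \<in> GA 1"
    using dgaA unfolding dga_def by (metis add_0_right)
  have A_d: "\<And>a. a \<in> GA 0 \<Longrightarrow> dA a \<in> GA 1"
    using dgaA unfolding dga_def by (metis One_nat_def)
  have B_la: "\<And>a \<omega>. a \<in> GB 0 \<Longrightarrow> \<omega> \<in> GB 1 \<Longrightarrow> a * \<omega> \<in> GB 1"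
    using dgaB unfolding dga_def by (metis add_0)
  have B_d: "\<And>a. a \<in> GB 0 \<Longrightarrow> dB a \<in> GB 1"
    using dgaB unfolding dga_def by (metis One_nat_def)
  have B_0: "(0::'ob) \<in> GB 1" using dgaB unfolding dga_def by metis
  have B_io: "\<And>c. \<iota>B c \<in> GB 0" using dgaB unfolding dga_def by blast
  have B_dio: "\<And>c. dB (\<iota>B c) = 0"
  proof -
    fix c
    have d1: "dB 1 = 0"
    proof -
      have "dB (1 * 1) = dB 1 * 1 + (-1) ^ 0 * 1 * dB 1"
        using dgaB unfolding dga_def by blast
      hence "dB 1 = dB 1 + dB 1" by simp
      thus ?thesis by simp
    qed
    have "dB (\<iota>B c * 1) = \<iota>B c * dB 1" using dgaB unfolding dga_def by blast
    thus "dB (\<iota>B c) = 0" using d1 by simp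
  qed
  have lE_add: "\<And>b x y. b \<in> GB 0 \<Longrightarrow> lE b (x + y) = lE b x + lE b y"
    using E_bimod unfolding bimodule_def left_module_def by blast
  have lE_plus: "\<And>r s x. r \<in> GB 0 \<Longrightarrow> s \<in> GB 0 \<Longrightarrow> lE (r + s) x = lE r x + lE s x"
    using E_bimod unfolding bimodule_def left_module_def by blast
  have lE_mult: "\<And>r s x. r \<in> GB 0 \<Longrightarrow> s \<in> GB 0 \<Longrightarrow> lE (r * s) x = lE r (lE s x)"
    using E_bimod unfolding bimodule_def left_module_def by blast
  have lE_1: "\<And>x. lE 1 x = x"
    using E_bimod unfolding bimodule_def left_module_def by blast
  have E_comp: "\<And>b a x. b \<in> GB 0 \<Longrightarrow> a \<in> GA 0 \<Longrightarrow> rE (lE b x) a = lE b (rE x a)"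
    using E_bimod unfolding bimodule_def by blast
  have lT_add: "\<And>b x y. b \<in> GB 0 \<Longrightarrow> lT b (x + y) = lT b x + lT b y"
    using T_bimod unfolding bimodule_def left_module_def by blast
  have rT_add: "\<And>a x y. a \<in> GA 0 \<Longrightarrow> rT (x + y) a = rT x a + rT y a"
    using T_bimod unfolding bimodule_def right_module_def by blast
  have tA_add1: "\<And>e e' \<omega>. \<omega> \<in> GA 1 \<Longrightarrow> tA (e + e') \<omega> = tA e \<omega> + tA e' \<omega>"
    using U_tensor unfolding is_tensor_def by blast
  have tA_add2: "\<And>e \<omega> \<omega>'. \<omega> \<in> GA 1 \<Longrightarrow> \<omega>' \<in> GA 1 \<Longrightarrow> tA e (\<omega> + \<omega>') = tA e \<omega> + tA e \<omega>'"
    using U_tensor unfolding is_tensor_def by blast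
  have tA_bal: "\<And>e a \<omega>. a \<in> GA 0 \<Longrightarrow> \<omega> \<in> GA 1 \<Longrightarrow> tA (rE e a) \<omega> = tA e (a * \<omega>)"
    using U_tensor unfolding is_tensor_def by blast
  have actM_add: "\<And>a. a \<in> GA 0 \<Longrightarrow> \<forall>s t. actM (s + t) a = actM s a + actM t a"
    using M_mod unfolding right_module_def by blast
  have nab_add: "\<And>f g. f \<in> homOm (GA 0) (GA 1) UNIV actM \<Longrightarrow> g \<in> homOm (GA 0) (GA 1) UNIV actM
      \<Longrightarrow> nab (\<lambda>\<omega>. f \<omega> + g \<omega>) = nab f + nab g"
    using M_hc unfolding hom_connection_def by blast
  have nab_leib: "\<And>f a. f \<in> homOm (GA 0) (GA 1) UNIV actM \<Longrightarrow> a \<in> GA 0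
      \<Longrightarrow> nab (hom_ract (GA 1) f a) = actM (nab f) a + f (dA a)"
    using M_hc unfolding hom_connection_def by blast
  define X where "X = homAEM (GA 0) rE actM"
  define H where "H = homOm (GB 0) (GB 1) X (homEM_ract lE)"
  define IM where "IM F = induced_map (GB 1) tB F" for F :: "'ob \<Rightarrow> 'e \<Rightarrow> 'm"
  define gg where "gg F e = (\<lambda>\<omega>. if \<omega> \<in> GA 1 then IM F (\<sigma> (tA e \<omega>)) else 0)"
    for F :: "'ob \<Rightarrow> 'e \<Rightarrow> 'm" and e
  have hcE: "\<And>F. hom_conn_E (GA 1) (GB 1) tB tA \<sigma> conn0 nab F = (\<lambda>e. nab (gg F e) - IM F (conn0 e))"
    unfolding hom_conn_E_def gg_def IM_def by (rule refl)
  have HX: "\<And>F \<omega>. F \<in> H \<Longrightarrow> \<omega> \<in> GB 1 \<Longrightarrow> F \<omega> \<in> X"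
    unfolding H_def homOm_def by blast
  have Xadd: "\<And>g e e'. g \<in> X \<Longrightarrow> g (e + e') = g e + g e'"
    unfolding X_def homAEM_def by blast
  have Xlin: "\<And>g e a. g \<in> X \<Longrightarrow> a \<in> GA 0 \<Longrightarrow> g (rE e a) = actM (g e) a"
    unfolding X_def homAEM_def by blast
  have Hadd: "\<And>F \<omega> \<omega>'. F \<in> H \<Longrightarrow> \<omega> \<in> GB 1 \<Longrightarrow> \<omega>' \<in> GB 1 \<Longrightarrow> F (\<omega> + \<omega>') = F \<omega> + F \<omega>'"
    unfolding H_def homOm_def by blast
  have Hlin: "\<And>F \<omega> b. F \<in> H \<Longrightarrow> \<omega> \<in> GB 1 \<Longrightarrow> b \<in> GB 0 \<Longrightarrow> F (\<omega> * b) = homEM_ract lE (F \<omega>) b"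
    unfolding H_def homOm_def by blast
  have IMp: "\<And>F. F \<in> H \<Longrightarrow> (\<forall>s t. IM F (s + t) = IM F s + IM F t) \<and> (\<forall>\<omega>\<in>GB 1. \<forall>e. IM F (tB \<omega> e) = F \<omega> e)"
  proof -
    fix F assume F: "F \<in> H"
    show "(\<forall>s t. IM F (s + t) = IM F s + IM F t) \<and> (\<forall>\<omega>\<in>GB 1. \<forall>e. IM F (tB \<omega> e) = F \<omega> e)"
      unfolding IM_def
    proof (rule induced_char[OF T_tensor])
      show "\<forall>x\<in>GB 1. \<forall>x'\<in>GB 1. \<forall>y. F (x + x') y = F x y + F x' y" using Hadd[OF F] by simp
      show "\<forall>x\<in>GB 1. \<forall>y y'. F x (y + y') = F x y + F x y'" using HX[OF F] Xadd by blast
      show "\<forall>x\<in>GB 1. \<forall>r\<in>GB 0. \<forall>y. F (x * r) y = F x (lE r y)"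
        using Hlin[OF F] by (simp add: homEM_ract_def)
    qed
  qed
  have IM_add: "\<And>F s t. F \<in> H \<Longrightarrow> IM F (s + t) = IM F s + IM F t" using IMp by blast
  have IM_gen: "\<And>F \<omega> e. F \<in> H \<Longrightarrow> \<omega> \<in> GB 1 \<Longrightarrow> IM F (tB \<omega> e) = F \<omega> e" using IMp by blast
  have IM_r: "\<And>F a t. F \<in> H \<Longrightarrow> a \<in> GA 0 \<Longrightarrow> IM F (rT t a) = actM (IM F t) a"
  proof -
    fix F a t assume F: "F \<in> H" and a: "a \<in> GA 0"
    have "(\<lambda>t. IM F (rT t a)) = (\<lambda>t. actM (IM F t) a)"
    proof (rule tensor_ext[OF T_tensor])
      show "\<forall>s t. IM F (rT (s + t) a) = IM F (rT s a) + IM F (rT t a)"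
        using rT_add[OF a] IM_add[OF F] by simp
      show "\<forall>s t. actM (IM F (s + t)) a = actM (IM F s) a + actM (IM F t) a"
        using actM_add[OF a] IM_add[OF F] by simp
      show "\<forall>x\<in>GB 1. \<forall>y\<in>UNIV. IM F (rT (tB x y) a) = actM (IM F (tB x y)) a"
        using T_right a IM_gen[OF F] HX[OF F] Xlin by (metis UNIV_I)
    qed
    thus "IM F (rT t a) = actM (IM F t) a" by metis
  qed
  have gg_hom: "\<And>F e. F \<in> H \<Longrightarrow> gg F e \<in> homOm (GA 0) (GA 1) UNIV actM"
  proof -
    fix F e assume F: "F \<in> H"
    show "gg F e \<in> homOm (GA 0) (GA 1) UNIV actM"
      unfolding homOm_def
    proof (intro CollectI conjI ballI allI impI)
      fix \<omega> \<omega>' assume "\<omega> \<in> GA 1" "\<omega>' \<in> GA 1"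
      thus "gg F e (\<omega> + \<omega>') = gg F e \<omega> + gg F e \<omega>'"
        using dgaA unfolding gg_def dga_def by (simp add: tA_add2 \<sigma>_add IM_add[OF F])
    next
      fix \<omega> a assume w: "\<omega> \<in> GA 1" and a: "a \<in> GA 0"
      show "gg F e (\<omega> * a) = actM (gg F e \<omega>) a"
        using w a A_ra U_right \<sigma>_right IM_r[OF F] unfolding gg_def by simp
    next
      fix \<omega> :: 'oa assume "\<omega> \<notin> GA 1" thus "gg F e \<omega> = 0" unfolding gg_def by simp
    qed simp
  qed
  have gg_add: "\<And>F e e'. F \<in> H \<Longrightarrow> gg F (e + e') = (\<lambda>\<omega>. gg F e \<omega> + gg F e' \<omega>)"
    unfolding gg_def by (auto simp: tA_add1 \<sigma>_add IM_add)
  have gg_rE: "\<And>F e a. a \<in> GA 0 \<Longrightarrow> gg F (rE e a) = hom_ract (GA 1) (gg F e) a"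
  proof -
    fix F e a assume a: "a \<in> GA 0"
    show "gg F (rE e a) = hom_ract (GA 1) (gg F e) a"
      unfolding gg_def hom_ract_def
    proof (rule ext)
      fix \<omega> show "(if \<omega> \<in> GA 1 then IM F (\<sigma> (tA (rE e a) \<omega>)) else 0) =
        (if \<omega> \<in> GA 1 then (if a * \<omega> \<in> GA 1 then IM F (\<sigma> (tA e (a * \<omega>))) else 0) else 0)"
        using tA_bal[OF a] A_la[OF a] by (cases "\<omega> \<in> GA 1") simp_all
    qed
  qed
  have claim1: "\<And>F. F \<in> H \<Longrightarrow> hom_conn_E (GA 1) (GB 1) tB tA \<sigma> conn0 nab F \<in> X"
  proof -
    fix F assume F: "F \<in> H"
    show "hom_conn_E (GA 1) (GB 1) tB tA \<sigma> conn0 nab F \<in> X"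
      unfolding hcE X_def homAEM_def
    proof (intro CollectI conjI allI ballI)
      fix e e'
      show "nab (gg F (e + e')) - IM F (conn0 (e + e')) =
            (nab (gg F e) - IM F (conn0 e)) + (nab (gg F e') - IM F (conn0 e'))"
        using gg_add[OF F] nab_add gg_hom[OF F] conn0_add IM_add[OF F] by (simp add: algebra_simps)
    next
      fix e a assume a: "a \<in> GA 0"
      have "nab (gg F (rE e a)) = actM (nab (gg F e)) a + IM F (\<sigma> (tA e (dA a)))"
        using gg_rE[OF a] nab_leib[OF gg_hom[OF F] a] A_d[OF a] by (simp add: gg_def)
      moreover have "IM F (conn0 (rE e a)) = actM (IM F (conn0 e)) a + IM F (\<sigma> (tA e (dA a)))"
        using conn0_right a IM_add[OF F] IM_r[OF F a] by simp
      ultimately show "nab (gg F (rE e a)) - IM F (conn0 (rE e a)) =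
            actM (nab (gg F e) - IM F (conn0 e)) a"
        using addh_diff[OF actM_add[OF a]] by simp
    qed
  qed
  have claim2: "right_module (GB 0) X (homEM_ract lE)"
    unfolding right_module_def
  proof (intro conjI ballI)
    show "0 \<in> X" unfolding X_def homAEM_def using addh_0[OF actM_add] by simp
    fix x y assume x: "x \<in> X" and y: "y \<in> X"
    show "x + y \<in> X" using x y unfolding X_def homAEM_def
      by (auto simp: actM_add algebra_simps)
  next
    fix x assume x: "x \<in> X"
    show "- x \<in> X" using x addh_neg[OF actM_add] unfolding X_def homAEM_def
      by auto
  next
    fix x r assume x: "x \<in> X" and r: "r \<in> GB 0"
    show "homEM_ract lE x r \<in> X"
      using x r unfolding X_def homAEM_def homEM_ract_def by (auto simp: lE_add E_comp[symmetric])
  next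
    fix x y r assume "x \<in> X" "y \<in> X" "r \<in> GB 0"
    show "homEM_ract lE (x + y) r = homEM_ract lE x r + homEM_ract lE y r"
      unfolding homEM_ract_def by (rule ext) simp
  next
    fix x r s assume x: "x \<in> X" and r: "r \<in> GB 0" and s: "s \<in> GB 0"
    show "homEM_ract lE x (r + s) = homEM_ract lE x r + homEM_ract lE x s"
      unfolding homEM_ract_def by (rule ext) (simp add: lE_plus[OF r s] Xadd[OF x])
    show "homEM_ract lE x (r * s) = homEM_ract lE (homEM_ract lE x r) s"
      unfolding homEM_ract_def by (rule ext) (simp add: lE_mult[OF r s])
  next
    fix x assume "x \<in> X"
    show "homEM_ract lE x 1 = x" unfolding homEM_ract_def by (simp add: lE_1)
  qed
  have claim4: "\<And>F b. F \<in> H \<Longrightarrow> b \<in> GB 0 \<Longrightarrow>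
      hom_conn_E (GA 1) (GB 1) tB tA \<sigma> conn0 nab (hom_ract (GB 1) F b)
      = homEM_ract lE (hom_conn_E (GA 1) (GB 1) tB tA \<sigma> conn0 nab F) b + F (dB b)"
  proof -
    fix F b assume F: "F \<in> H" and b: "b \<in> GB 0"
    define F' where "F' = hom_ract (GB 1) F b"
    have IMF': "IM F' = (\<lambda>t. IM F (lT b t))"
      unfolding IM_def[of F']
    proof (rule induced_eq[OF T_tensor])
      show "\<forall>s t. IM F (lT b (s + t)) = IM F (lT b s) + IM F (lT b t)"
        using lT_add[OF b] IM_add[OF F] by simp
      show "\<forall>x\<in>GB 1. \<forall>y. IM F (lT b (tB x y)) = F' x y"
      proof (intro ballI allI)
        fix x y assume x: "x \<in> GB 1"
        have "lT b (tB x y) = tB (b * x) y" using T_left b x by simp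
        thus "IM F (lT b (tB x y)) = F' x y"
          using IM_gen[OF F B_la[OF b x]] x unfolding F'_def hom_ract_def by simp
      qed
    qed
    have ggF': "\<And>e. gg F' e = gg F (lE b e)"
      unfolding gg_def IMF' using U_left \<sigma>_left b by (auto intro!: ext)
    have c0: "\<And>e. IM F (conn0 (lE b e)) = F (dB b) e + IM F (lT b (conn0 e))"
      using conn0_left b IM_add[OF F] IM_gen[OF F] B_d[OF b] by simp
    show "hom_conn_E (GA 1) (GB 1) tB tA \<sigma> conn0 nab (hom_ract (GB 1) F b)
      = homEM_ract lE (hom_conn_E (GA 1) (GB 1) tB tA \<sigma> conn0 nab F) b + F (dB b)"
      unfolding F'_def[symmetric] hcE homEM_ract_def
    proof (rule ext)
      fix e
      show "nab (gg F' e) - IM F' (conn0 e) =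
         ((\<lambda>e. nab (gg F (lE b e)) - IM F (conn0 (lE b e))) + F (dB b)) e"
        using ggF' IMF' c0 by (simp add: algebra_simps)
    qed
  qed
  have claim3: "hom_connection \<iota>B GB dB X (homEM_ract lE) (hom_conn_E (GA 1) (GB 1) tB tA \<sigma> conn0 nab)"
    unfolding hom_connection_def H_def[symmetric]
  proof (intro conjI ballI allI)
    fix F assume "F \<in> H" thus "hom_conn_E (GA 1) (GB 1) tB tA \<sigma> conn0 nab F \<in> X" by (rule claim1)
  next
    fix F G assume F: "F \<in> H" and G: "G \<in> H"
    define FG where "FG = (\<lambda>\<omega>. F \<omega> + G \<omega>)"
    have IMFG: "IM FG = (\<lambda>t. IM F t + IM G t)"
      unfolding IM_def[of FG]
    proof (rule induced_eq[OF T_tensor])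
      show "\<forall>s t. IM F (s + t) + IM G (s + t) = (IM F s + IM G s) + (IM F t + IM G t)"
        using IM_add[OF F] IM_add[OF G] by (simp add: algebra_simps)
      show "\<forall>x\<in>GB 1. \<forall>y. IM F (tB x y) + IM G (tB x y) = FG x y"
        using IM_gen[OF F] IM_gen[OF G] unfolding FG_def by simp
    qed
    have ggFG: "\<And>e. gg FG e = (\<lambda>\<omega>. gg F e \<omega> + gg G e \<omega>)"
      unfolding gg_def IMFG by auto
    show "hom_conn_E (GA 1) (GB 1) tB tA \<sigma> conn0 nab (\<lambda>\<omega>. F \<omega> + G \<omega>) =
          hom_conn_E (GA 1) (GB 1) tB tA \<sigma> conn0 nab F + hom_conn_E (GA 1) (GB 1) tB tA \<sigma> conn0 nab G"
      unfolding FG_def[symmetric] hcE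
    proof (rule ext)
      fix e
      show "nab (gg FG e) - IM FG (conn0 e) =
        ((\<lambda>e. nab (gg F e) - IM F (conn0 e)) + (\<lambda>e. nab (gg G e) - IM G (conn0 e))) e"
        using ggFG nab_add[OF gg_hom[OF F] gg_hom[OF G]] IMFG by (simp add: algebra_simps)
    qed
  next
    fix F c assume F: "F \<in> H"
    have "F (dB (\<iota>B c)) = 0"
    proof -
      have "F (0 + 0) = F 0 + F 0" using Hadd[OF F B_0 B_0] .
      thus ?thesis using B_dio by simp
    qed
    thus "hom_conn_E (GA 1) (GB 1) tB tA \<sigma> conn0 nab (hom_ract (GB 1) F (\<iota>B c)) =
          homEM_ract lE (hom_conn_E (GA 1) (GB 1) tB tA \<sigma> conn0 nab F) (\<iota>B c)"
      using claim4[OF F B_io] by simp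
  next
    fix F a assume F: "F \<in> H" and a: "a \<in> GB 0"
    show "hom_conn_E (GA 1) (GB 1) tB tA \<sigma> conn0 nab (hom_ract (GB 1) F a) =
          homEM_ract lE (hom_conn_E (GA 1) (GB 1) tB tA \<sigma> conn0 nab F) a + F (dB a)"
      by (rule claim4[OF F a])
  qed
  show ?thesis using claim1 claim2 claim3 unfolding X_def H_def by blast
qed

end
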